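(* Let $\Psi=\langle \mathcal{S},\mathcal{P},\mathcal{T}\rangle$ with $\mathcal{T}=\langle prov,req\rangle$ be an SPL and let $c\in\mathcal{C}$ be redundant. Define $\mathcal{T}'=\langle prov',req'\rangle$ by $prov'(f)=prov(f)\setminus\{A : c\in A\}$ and $req'(f)=req(f)\setminus\{A: c\in A\}$ for every $f\in\mathcal{F}$, and let $\Psi'=\langle \mathcal{S},\mathcal{P},\mathcal{T}'\rangle$. Then $Prod(\Psi)=Prod(\Psi')$.
   Context: An SPL $\Psi=\langle \mathcal{S},\mathcal{P},\mathcal{T}\rangle$ consists of a finite set of features $\mathcal{F}$, a finite set of components $\mathcal{C}$, a scope $\mathcal{S}\subseteq \mathcal{P}ow(\mathcal{F})$ (elements are specifications), a platform $\mathcal{P}\subseteq \mathcal{P}ow(\mathcal{C})$ (elements are architectures), and a traceability relation $\mathcal{T}=\langle prov, req\rangle$ with $prov, req:\mathcal{F}\to\mathcal{P}ow(\mathcal{P}ow(\mathcal{C}))$. For $C\subseteq\mathcal{C}$, $f\in\mathcal{F}$: $implements_\Psi(C,f)$ iff $\exists C_1\in prov(f), C_2\in req(f)$ with $C_2\subseteq C_1\subseteq C$; $Provided\_by_\Psi(C)=\{f: implements_\Psi(C,f)\}$. $\mathrm{Covers}_\Psi(C,F)$ iff $Provided\_by_\Psi(C)\in\mathcal{S}$ and $F\subseteq Provided\_by_\Psi(C)$. The set of products is $Prod(\Psi)=\{\langle F,C\rangle : F\in\mathcal{S}, C\in\mathcal{P}, \mathrm{Covers}_\Psi(C,F)\}$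 (for $\Psi'$ all these notions are computed with $\mathcal{T}'$). A component $c\in\mathcal{C}$ is redundant (in $\Psi$) if for every $C\in\mathcal{P}$ with $c\in C$ there exists $C'\in\mathcal{P}$ with $c\notin C'$, $C'\subseteq C$ and $Provided\_by_\Psi(C)=Provided\_by_\Psi(C')$. *)

theory Defs
  imports Main
begin

text \<open>An SPL over feature universe FF and component universe CC, with scope S,
platform P and traceability relation (prov, req).\<close>

definition is_SPL ::
  "'f set \<Rightarrow> 'c set \<Rightarrow> 'f set set \<Rightarrow> 'c set set \<Rightarrow> ('f \<Rightarrow> 'c set set) \<Rightarrow> ('f \<Rightarrow> 'c set set) \<Rightarrow> bool" where
  "is_SPL FF CC S P prov req \<longleftrightarrow>
     finite FF \<and> finite CC \<and> S \<subseteq> Pow FF \<and> P \<subseteq> Pow CC \<and>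
     (\<forall>f\<in>FF. prov f \<subseteq> Pow CC \<and> req f \<subseteq> Pow CC)"

definition implements ::
  "('f \<Rightarrow> 'c set set) \<Rightarrow> ('f \<Rightarrow> 'c set set) \<Rightarrow> 'c set \<Rightarrow> 'f \<Rightarrow> bool" where
  "implements prov req C f \<longleftrightarrow> (\<exists>C1\<in>prov f. \<exists>C2\<in>req f. C2 \<subseteq> C1 \<and> C1 \<subseteq> C)"

definition Provided_by ::
  "'f set \<Rightarrow> ('f \<Rightarrow> 'c set set) \<Rightarrow> ('f \<Rightarrow> 'c set set) \<Rightarrow> 'c set \<Rightarrow> 'f set" where
  "Provided_by FF prov req C = {f\<in>FF. implements prov req C f}"

definition Covers ::
  "'f set \<Rightarrow> 'f set set \<Rightarrow> ('f \<Rightarrow> 'c set set) \<Rightarrow> ('f \<Rightarrow> 'c set set) \<Rightarrow> 'c set \<Rightarrow> 'f set \<Rightarrow> bool" where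
  "Covers FF S prov req C F \<longleftrightarrow> Provided_by FF prov req C \<in> S \<and> F \<subseteq> Provided_by FF prov req C"

definition Prod ::
  "'f set \<Rightarrow> 'f set set \<Rightarrow> 'c set set \<Rightarrow> ('f \<Rightarrow> 'c set set) \<Rightarrow> ('f \<Rightarrow> 'c set set) \<Rightarrow> ('f set \<times> 'c set) set" where
  "Prod FF S P prov req = {(F, C). F \<in> S \<and> C \<in> P \<and> Covers FF S prov req C F}"

definition redundant ::
  "'f set \<Rightarrow> 'c set set \<Rightarrow> ('f \<Rightarrow> 'c set set) \<Rightarrow> ('f \<Rightarrow> 'c set set) \<Rightarrow> 'c \<Rightarrow> bool" where
  "redundant FF P prov req c \<longleftrightarrow>
     (\<forall>C\<in>P. c \<in> C \<longrightarrow> (\<exists>C'\<in>P. c \<notin> C' \<and> C' \<subseteq> C \<and>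
        Provided_by FF prov req C = Provided_by FF prov req C'))"

definition remove_comp :: "'c \<Rightarrow> ('f \<Rightarrow> 'c set set) \<Rightarrow> ('f \<Rightarrow> 'c set set)" where
  "remove_comp c t = (\<lambda>f. t f - {A. c \<in> A})"

end

theory Submission imports Defs begin
lemma imp_rc_sub: "implements (remove_comp c prov) (remove_comp c req) C f \<Longrightarrow> implements prov req C f"
proof -
  assume "implements (remove_comp c prov) (remove_comp c req) C f"
  then obtain C1 C2 where "C1 \<in> remove_comp c prov f" "C2 \<in> remove_comp c req f" "C2 \<subseteq> C1" "C1 \<subseteq> C"
    unfolding implements_def by blast
  then show ?thesis unfolding implements_def remove_comp_def by blast
qed
lemma imp_rc_notin: "c \<notin> C \<Longrightarrow> implements prov req C f \<Longrightarrow> implements (remove_comp c prov) (remove_comp c req) C f"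
proof -
  assume n: "c \<notin> C" and "implements prov req C f"
  then obtain C1 C2 where h: "C1 \<in> prov f" "C2 \<in> req f" "C2 \<subseteq> C1" "C1 \<subseteq> C"
    unfolding implements_def by blast
  have "c \<notin> C1" using n h by blast
  moreover have "c \<notin> C2" using calculation h by blast
  ultimately have "C1 \<in> remove_comp c prov f" "C2 \<in> remove_comp c req f"
    unfolding remove_comp_def using h by simp_all
  then show ?thesis unfolding implements_def using h by blast
qed

lemma imp_mono: "implements p r C' f \<Longrightarrow> C' \<subseteq> C \<Longrightarrow> implements p r C f"
proof -
  assume a: "implements p r C' f" and b: "C' \<subseteq> C"
  from a obtain C1 C2 where h: "C1 \<in> p f" "C2 \<in> r f" "C2 \<subseteq> C1" "C1 \<subseteq> C'"
    unfolding implements_def by blast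
  have "C1 \<subseteq> C" using h(4) b by (rule order_trans)
  then show ?thesis unfolding implements_def using h by blast
qed

lemma prov_eq:
  assumes red: "redundant FF P prov req c" and CP: "C \<in> P"
  shows "Provided_by FF (remove_comp c prov) (remove_comp c req) C = Provided_by FF prov req C"
proof (cases "c \<in> C")
  case False
  show ?thesis unfolding Provided_by_def
    using imp_rc_sub[of c prov req C] imp_rc_notin[OF False, of prov req] by auto
next
  case True
  then obtain C' where C': "c \<notin> C'" "C' \<subseteq> C" "Provided_by FF prov req C = Provided_by FF prov req C'"
  proof -
    have "\<forall>C\<in>P. c \<in> C \<longrightarrow> (\<exists>C'\<in>P. c \<notin> C' \<and> C' \<subseteq> C \<and>
        Provided_by FF prov req C = Provided_by FF prov req C')" using red unfolding redundant_def .
    then have "\<exists>C'\<in>P. c \<notin> C' \<and> C' \<subseteq> C \<and> Provided_by FF prov req C = Provided_by FF prov req C'"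
      using CP True by simp
    then show ?thesis using that by metis
  qed
  show ?thesis
  proof
    show "Provided_by FF (remove_comp c prov) (remove_comp c req) C \<subseteq> Provided_by FF prov req C"
      unfolding Provided_by_def using imp_rc_sub[of c prov req C] by auto
    show "Provided_by FF prov req C \<subseteq> Provided_by FF (remove_comp c prov) (remove_comp c req) C"
    proof
      fix f assume "f \<in> Provided_by FF prov req C"
      then have "f \<in> Provided_by FF prov req C'" using C'(3) by simp
      then have f: "f \<in> FF" "implements prov req C' f" unfolding Provided_by_def by simp_all
      have "implements (remove_comp c prov) (remove_comp c req) C' f" using imp_rc_notin[OF C'(1) f(2)] .
      then have "implements (remove_comp c prov) (remove_comp c req) C f" by (rule imp_mono[OF _ C'(2)])
      then show "f \<in> Provided_by FF (remove_comp c prov) (remove_comp c req) C"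
        unfolding Provided_by_def using f(1) by simp
    qed
  qed
qed

theorem mainTheorem4:
  fixes FF :: "'f set" and CC :: "'c set" and S :: "'f set set" and P :: "'c set set"
    and prov req :: "'f \<Rightarrow> 'c set set" and c :: 'c
  assumes "is_SPL FF CC S P prov req"
    and "c \<in> CC"
    and "redundant FF P prov req c"
  shows "Prod FF S P prov req = Prod FF S P (remove_comp c prov) (remove_comp c req)"
proof -
  have "\<And>F C. C \<in> P \<Longrightarrow> Covers FF S prov req C F = Covers FF S (remove_comp c prov) (remove_comp c req) C F"
  proof -
    fix F C assume "C \<in> P"
    note e = prov_eq[OF assms(3) this]
    show "Covers FF S prov req C F = Covers FF S (remove_comp c prov) (remove_comp c req) C F"
      unfolding Covers_def e ..
  qed
  then show ?thesis unfolding Prod_def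
    by (intro Collect_cong) (auto split: prod.splits)
qed

end
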